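(* Let $f,g:\mathbb N\to\mathbb C$ and $\beta\in\mathbb C$ satisfy: for every even $n\in\mathbb N$, $g(n+2)f(n+2)-g(n)f(n)\mathbf 1_{\{n\ge2\}}=\beta$. Assume $|f(2n)|>0$ for all $n\ge1$ and that the limit $M_f=\lim_{n\to\infty}n/|f(2n)|\in[0,\infty]$ exists. Then for all $l,m,n\in\mathbb N$ and all $\alpha\in\mathbb C$ with $|\alpha|<M_f$, $\Omega\in\mathrm D\big((g_{N+2}L^2)^l N^m (f_NL^{*2})^n e^{\alpha f_NL^{*2}}\big)$, and $\xi_{\alpha,f}=e^{\alpha f_NL^{*2}}\Omega$ satisfies $g_{N+2}L^2\,\xi_{\alpha,f}=\alpha\beta\,\xi_{\alpha,f}$.
   Context: $\ell^2=\ell^2(\mathbb N)$, $\mathbb N=\{0,1,\dots\}$, basis $(\xi_n)$, $\Omega=\xi_0$; $N\xi_n=n\xi_n$ (maximal domain). $f_NL^{*2}$ is the operator $\xi_n\mapsto f(n+2)\xi_{n+2}$ (closure from finite combinations, maximal domain); $g_{N+2}L^2$ is the operator $\xi_n\mapsto g(n)\xi_{n-2}$ for $n\ge2$ and $\xi_0,\xi_1\mapsto0$ (maximal domain). Exponentials are defined by power series: $e^{A}\varphi=\sum_k A^k\varphi/k!$ on the set of $\varphi\in\bigcap_k\mathrm D(A^k)$ for which the series converges; compositions have their natural domains. *)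

theory Defs
  imports "HOL-Analysis.Analysis"
begin

text \<open>Vectors of l2(N) are represented by their coefficient sequences w.r.t. the
  basis xi_n; an (unbounded) operator is a pair (domain, action).\<close>

type_synonym vec = "nat \<Rightarrow> complex"
type_synonym op = "vec set \<times> (vec \<Rightarrow> vec)"

definition l2 :: "vec set" where
  "l2 = {x. summable (\<lambda>n. (cmod (x n))^2)}"

definition l2norm :: "vec \<Rightarrow> real" where
  "l2norm x = sqrt (\<Sum>n. (cmod (x n))^2)"

definition opdom :: "op \<Rightarrow> vec set" where "opdom A = fst A"
definition opapp :: "op \<Rightarrow> vec \<Rightarrow> vec" where "opapp A = snd A"

definition basis :: "nat \<Rightarrow> vec" where "basis n = (\<lambda>k. if k = n then 1 else 0)"
definition Omega :: vec where "Omega = basis 0"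

definition numop :: op where
  "numop = ({x \<in> l2. (\<lambda>k. of_nat k * x k) \<in> l2}, \<lambda>x k. of_nat k * x k)"

text \<open>f_N L*^2 : xi_n \<mapsto> f(n+2) xi_(n+2), maximal domain\<close>
definition raise_op :: "(nat \<Rightarrow> complex) \<Rightarrow> op" where
  "raise_op f = ({x \<in> l2. (\<lambda>k. if k < 2 then 0 else f k * x (k - 2)) \<in> l2},
                 \<lambda>x k. if k < 2 then 0 else f k * x (k - 2))"

text \<open>g_(N+2) L^2 : xi_n \<mapsto> g(n) xi_(n-2) (n \<ge> 2), xi_0, xi_1 \<mapsto> 0, maximal domain\<close>
definition lower_op :: "(nat \<Rightarrow> complex) \<Rightarrow> op" where
  "lower_op g = ({x \<in> l2. (\<lambda>k. g (k + 2) * x (k + 2)) \<in> l2},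
                 \<lambda>x k. g (k + 2) * x (k + 2))"

definition op_comp :: "op \<Rightarrow> op \<Rightarrow> op" where
  "op_comp A B = ({x \<in> opdom B. opapp B x \<in> opdom A}, \<lambda>x. opapp A (opapp B x))"

primrec op_pow :: "op \<Rightarrow> nat \<Rightarrow> op" where
  "op_pow A 0 = (l2, \<lambda>x. x)"
| "op_pow A (Suc k) = op_comp A (op_pow A k)"

definition exp_partial :: "op \<Rightarrow> complex \<Rightarrow> vec \<Rightarrow> nat \<Rightarrow> vec" where
  "exp_partial A c phi N = (\<lambda>j. \<Sum>k<N. c ^ k * opapp (op_pow A k) phi j / of_nat (fact k))"

definition exp_converges_to :: "op \<Rightarrow> complex \<Rightarrow> vec \<Rightarrow> vec \<Rightarrow> bool" where
  "exp_converges_to A c phi y \<longleftrightarrow> y \<in> l2 \<and>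
     (\<lambda>N. l2norm (\<lambda>j. exp_partial A c phi N j - y j)) \<longlonglongrightarrow> 0"

definition op_exp :: "op \<Rightarrow> complex \<Rightarrow> op" where
  "op_exp A c = ({phi. (\<forall>k. phi \<in> opdom (op_pow A k)) \<and> (\<exists>y. exp_converges_to A c phi y)},
                 \<lambda>phi. THE y. exp_converges_to A c phi y)"

end

theory Submission imports Defs "HOL-Real_Asymp.Real_Asymp" begin

definition Fp :: "(nat \<Rightarrow> complex) \<Rightarrow> nat \<Rightarrow> complex" where
  "Fp f k = (\<Prod>i\<in>{1..k}. f (2*i))"

definition Vv :: "(nat \<Rightarrow> complex) \<Rightarrow> (nat \<Rightarrow> complex) \<Rightarrow> vec" where
  "Vv f c = (\<lambda>j. if even j then c (j div 2) * Fp f (j div 2) else 0)"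

definition shiftc :: "(nat \<Rightarrow> complex) \<Rightarrow> nat \<Rightarrow> complex" where
  "shiftc c = (\<lambda>k. if k = 0 then 0 else c (k - 1))"

definition Gc :: "real \<Rightarrow> (nat \<Rightarrow> complex) \<Rightarrow> bool" where
  "Gc r c \<longleftrightarrow> (\<exists>C p. \<forall>k. cmod (c k) \<le> C * (real k + 1) ^ p * r ^ k / fact k)"

lemma Fp_Suc: "Fp f (Suc k) = f (2 * Suc k) * Fp f k"
  unfolding Fp_def by (simp add: prod.nat_ivl_Suc' mult.commute)

lemma Fp_0[simp]: "Fp f 0 = 1" unfolding Fp_def by simp

lemma raise_V: "snd (raise_op f) (Vv f c) = Vv f (shiftc c)"
proof
  fix j
  show "snd (raise_op f) (Vv f c) j = Vv f (shiftc c) j"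
  proof (cases "j < 2")
    case True then show ?thesis
      by (auto simp: raise_op_def Vv_def shiftc_def less_2_cases_iff)
  next
    case False
    then obtain i where j: "j = i + 2" by (metis add.commute le_Suc_ex not_less)
    show ?thesis
    proof (cases "even i")
      case True
      then obtain t where "i = 2*t" by blast
      then show ?thesis using j by (auto simp: raise_op_def Vv_def shiftc_def Fp_Suc)
    next
      case False then show ?thesis using j by (auto simp: raise_op_def Vv_def shiftc_def)
    qed
  qed
qed

lemma num_V: "snd numop (Vv f c) = Vv f (\<lambda>k. 2 * of_nat k * c k)"
  by (auto simp: numop_def Vv_def fun_eq_iff)

lemma gf_rel:
  fixes f g :: "nat \<Rightarrow> complex"
  assumes hrel: "\<forall>k. even k \<longrightarrow> g (k + 2) * f (k + 2) - (if k \<ge> 2 then g k * f k else 0) = \<beta>"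
  shows "g (2 * k + 2) * f (2 * k + 2) = (of_nat k + 1) * \<beta>"
proof (induction k)
  case 0 then show ?case using hrel[rule_format, of 0] by simp
next
  case (Suc k)
  have "g (2 * k + 2 + 2) * f (2 * k + 2 + 2) - g (2*k+2) * f (2*k+2) = \<beta>"
    using hrel[rule_format, of "2*k+2"] by simp
  then show ?case using Suc by (simp add: algebra_simps)
qed

lemma lower_V:
  fixes f g :: "nat \<Rightarrow> complex"
  assumes hrel: "\<forall>k. even k \<longrightarrow> g (k + 2) * f (k + 2) - (if k \<ge> 2 then g k * f k else 0) = \<beta>"
  shows "snd (lower_op g) (Vv f c) = Vv f (\<lambda>k. (of_nat k + 1) * \<beta> * c (k + 1))"
proof
  fix j
  show "snd (lower_op g) (Vv f c) j = Vv f (\<lambda>k. (of_nat k + 1) * \<beta> * c (k + 1)) j"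
  proof (cases "even j")
    case True
    then obtain t where t: "j = 2*t" by blast
    have "(j + 2) div 2 = Suc t" using t by simp
    then show ?thesis using t gf_rel[OF hrel, of t]
      by (simp add: lower_op_def Vv_def Fp_Suc algebra_simps)
  next
    case False then show ?thesis by (simp add: lower_op_def Vv_def)
  qed
qed

lemma V_sums:
  assumes "summable (\<lambda>k. (cmod (c k * Fp f k))^2)"
  shows "(\<lambda>j. (cmod (Vv f c j))^2) sums (\<Sum>k. (cmod (c k * Fp f k))^2)"
proof -
  have "(\<lambda>n. (cmod (Vv f c (2*n)))^2) sums (\<Sum>k. (cmod (c k * Fp f k))^2)"
    using summable_sums[OF assms] by (simp add: Vv_def)
  then show ?thesis
    by (subst (asm) sums_mono_reindex[of "\<lambda>n. 2*n"])
       (auto simp: strict_mono_def Vv_def elim!: evenE)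
qed

lemma V_l2:
  assumes "summable (\<lambda>k. (cmod (c k * Fp f k))^2)"
  shows "Vv f c \<in> l2"
  using V_sums[OF assms] unfolding l2_def by (auto simp: sums_iff)

lemma w_Suc:
  fixes r :: real
  shows "(real (Suc k) + 1)^p * r^(Suc k) * cmod (Fp f (Suc k)) / fact (Suc k)
       = ((real k + 2)/(real k + 1))^p * (r * cmod (f (2*k+2)) / (real k + 1)) *
         ((real k + 1)^p * r^k * cmod (Fp f k) / fact k)"
proof -
  have a: "real k + 1 > 0" by simp
  have e1: "real (Suc k) + 1 = real k + 2" by simp
  have fs: "fact (Suc k) = (real k + 1) * (fact k :: real)" by simp
  have "cmod (Fp f (Suc k)) = cmod (f (2*k+2)) * cmod (Fp f k)"
    by (simp add: Fp_Suc norm_mult)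
  moreover have "\<And>(a::real) F b Y Z q. a > 0 \<Longrightarrow> F > 0 \<Longrightarrow>
     b * (r * q) * (Y * Z) / (a * F) = (b / a^p) * (r * Y / a) * (a^p * q * Z / F)"
    by (simp add: field_simps)
  ultimately show ?thesis unfolding e1 fs power_divide power_Suc
    using a by simp
qed


lemma w_summable:
  fixes r r' :: real
  assumes r: "0 < r" "r < r'"
    and ev: "\<forall>\<^sub>F k in sequentially. r' < real k / cmod (f (2*k))"
  shows "summable (\<lambda>k. ((real k + 1)^p * r^k * cmod (Fp f k) / fact k)^2)"
proof -
  define w where "w k = (real k + 1)^p * r^k * cmod (Fp f k) / fact k" for k
  have lim: "(\<lambda>k. ((real k + 2)/(real k + 1))^(2*p)) \<longlonglongrightarrow> 1" by real_asymp
  have "1 < r'/r" using r by simp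
  from order_tendstoD(2)[OF lim this]
  obtain N2 where N2: "\<And>k. k \<ge> N2 \<Longrightarrow> ((real k + 2)/(real k + 1))^(2*p) < r'/r"
    by (auto simp: eventually_sequentially)
  from ev obtain N1 where N1: "\<And>k. k \<ge> N1 \<Longrightarrow> r' < real k / cmod (f (2*k))"
    by (auto simp: eventually_sequentially)
  have step: "norm ((w (Suc k))^2) \<le> (r/r') * norm ((w k)^2)" if k: "k \<ge> max N1 N2" for k
  proof -
    have "r' < real (Suc k) / cmod (f (2 * Suc k))" using N1[of "Suc k"] k by simp
    hence h1: "r' < (real k + 1) / cmod (f (2*k+2))" by (simp add: add.commute)
    have fpos: "cmod (f (2*k+2)) > 0"
    proof (rule ccontr)
      assume "\<not> ?thesis" hence "cmod (f (2*k+2)) = 0" by simp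
      with h1 r show False by simp
    qed
    have "cmod (f (2*k+2)) * r' < real k + 1" using h1 fpos by (simp add: field_simps)
    hence B: "r * cmod (f (2*k+2)) / (real k + 1) \<le> r / r'"
    proof -
      have "r * (cmod (f (2*k+2)) * r') \<le> r * (real k + 1)"
        using r by (intro mult_left_mono) (use \<open>cmod (f (2*k+2)) * r' < real k + 1\<close> in auto)
      then show ?thesis using r fpos by (simp add: field_simps)
    qed
    define A where "A = ((real k + 2)/(real k + 1))^p"
    define B' where "B' = r * cmod (f (2*k+2)) / (real k + 1)"
    have A2: "A^2 \<le> r'/r" using N2[of k] k by (simp add: A_def power_mult[symmetric] mult.commute)
    have B0: "0 \<le> B'" using r by (simp add: B'_def)
    have B2: "B'^2 \<le> (r/r')^2" using B B0 by (simp add: B'_def power_mono)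
    have ws: "w (Suc k) = A * B' * w k" unfolding w_def A_def B'_def by (rule w_Suc)
    have "(w (Suc k))^2 = A^2 * B'^2 * (w k)^2" by (simp add: ws power_mult_distrib)
    also have "\<dots> \<le> (r'/r) * (r/r')^2 * (w k)^2"
      using r by (intro mult_right_mono mult_mono A2 B2) auto
    also have "\<dots> = (r/r') * (w k)^2" using r by (simp add: power2_eq_square)
    finally show ?thesis by simp
  qed
  have "summable (\<lambda>k. (w k)^2)"
    by (rule summable_ratio_test[of "r/r'" "max N1 N2"]) (use r step in auto)
  then show ?thesis by (simp add: w_def)
qed


lemma aux1: "(a::real) > 0 \<Longrightarrow> F > 0 \<Longrightarrow> C * x * q / F = C * (a * x) * q / (a * F)"
  by (simp add: field_simps)

lemma aux2: "(a::real) > 0 \<Longrightarrow> F > 0 \<Longrightarrow>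
   a * b * (C * (2 * a) ^ p * (r * q) / (a * F)) = (b * C * r * 2^p) * a^p * q / F"
  by (simp add: field_simps power_mult_distrib)

lemma fact_Suc_real: "fact (Suc i) = (real i + 1) * (fact i :: real)"
  by (simp add: add.commute)

lemma Gc_nonneg:
  assumes "\<forall>k. cmod (c k) \<le> C * (real k + 1) ^ p * r ^ k / fact k"
  shows "C \<ge> 0"
proof -
  have "cmod (c 0) \<le> C" using assms[rule_format, of 0] by simp
  thus ?thesis using norm_ge_zero order_trans by blast
qed

lemma Gc_summ:
  fixes r r' :: real
  assumes r: "0 < r" "r < r'"
    and ev: "\<forall>\<^sub>F k in sequentially. r' < real k / cmod (f (2*k))"
    and G: "Gc r c"
  shows "summable (\<lambda>k. (cmod (c k * Fp f k))^2)"
proof -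
  from G obtain C p where Cp: "\<forall>k. cmod (c k) \<le> C * (real k + 1) ^ p * r ^ k / fact k"
    unfolding Gc_def by blast
  have C0: "C \<ge> 0" by (rule Gc_nonneg[OF Cp])
  have S: "summable (\<lambda>k. C^2 * ((real k + 1)^p * r^k * cmod (Fp f k) / fact k)^2)"
    by (intro summable_mult w_summable[OF r ev])
  show ?thesis
  proof (rule summable_comparison_test[OF _ S], intro exI allI impI)
    fix k
    have "cmod (c k * Fp f k) \<le> C * (real k + 1) ^ p * r ^ k / fact k * cmod (Fp f k)"
      unfolding norm_mult by (intro mult_right_mono) (use Cp in auto)
    also have "\<dots> = C * ((real k + 1)^p * r^k * cmod (Fp f k) / fact k)" by simp
    finally have P: "(cmod (c k * Fp f k))^2 \<le> (C * ((real k + 1)^p * r^k * cmod (Fp f k) / fact k))^2"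
      by (intro power_mono) auto
    have W: "(C * ((real k + 1)^p * r^k * cmod (Fp f k) / fact k))^2 = C^2 * ((real k + 1)^p * r^k * cmod (Fp f k) / fact k)^2"
      by (rule power_mult_distrib)
    from P show "norm ((cmod (c k * Fp f k))\<^sup>2) \<le> C^2 * ((real k + 1)^p * r^k * cmod (Fp f k) / fact k)^2"
      unfolding W by simp
  qed
qed

lemma Gc_l2:
  fixes r r' :: real
  assumes r: "0 < r" "r < r'"
    and ev: "\<forall>\<^sub>F k in sequentially. r' < real k / cmod (f (2*k))"
    and G: "Gc r c"
  shows "Vv f c \<in> l2"
  by (rule V_l2, rule Gc_summ[OF r ev G])

lemma Gc_shift:
  assumes r: "0 < r" and G: "Gc r c"
  shows "Gc r (shiftc c)"
proof -
  from G obtain C p where Cp: "\<forall>k. cmod (c k) \<le> C * (real k + 1) ^ p * r ^ k / fact k"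
    unfolding Gc_def by blast
  have C0: "C \<ge> 0" by (rule Gc_nonneg[OF Cp])
  have "\<forall>k. cmod (shiftc c k) \<le> (C / r) * (real k + 1) ^ Suc p * r ^ k / fact k"
  proof
    fix k show "cmod (shiftc c k) \<le> (C / r) * (real k + 1) ^ Suc p * r ^ k / fact k"
    proof (cases k)
      case 0 then show ?thesis using C0 r by (simp add: shiftc_def)
    next
      case (Suc i)
      have "cmod (shiftc c k) \<le> C * (real i + 1) ^ p * r ^ i / fact i"
        using Cp Suc by (simp add: shiftc_def)
      also have "\<dots> = C * ((real i + 1) ^ Suc p) * r ^ i / fact (Suc i)"
        unfolding fact_Suc_real power_Suc by (rule aux1) auto
      also have "\<dots> \<le> C * ((real i + 2) ^ Suc p) * r ^ i / fact (Suc i)"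
        using C0 r by (intro divide_right_mono mult_right_mono mult_left_mono power_mono) auto
      also have "\<dots> = (C / r) * (real k + 1) ^ Suc p * r ^ k / fact k"
        using Suc r by (simp add: field_simps del: fact_Suc)
      finally show ?thesis .
    qed
  qed
  then show ?thesis unfolding Gc_def by blast
qed

lemma Gc_num:
  assumes G: "Gc r c"
  shows "Gc r (\<lambda>k. 2 * of_nat k * c k)"
proof -
  from G obtain C p where Cp: "\<forall>k. cmod (c k) \<le> C * (real k + 1) ^ p * r ^ k / fact k"
    unfolding Gc_def by blast
  have C0: "C \<ge> 0" by (rule Gc_nonneg[OF Cp])
  have "\<forall>k. cmod (2 * of_nat k * c k) \<le> (2 * C) * (real k + 1) ^ Suc p * r ^ k / fact k"
  proof
    fix k
    have "cmod (2 * of_nat k * c k) = 2 * real k * cmod (c k)" by (simp add: norm_mult)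
    also have "\<dots> \<le> 2 * (real k + 1) * (C * (real k + 1) ^ p * r ^ k / fact k)"
      using Cp by (intro mult_mono) auto
    also have "\<dots> = (2 * C) * (real k + 1) ^ Suc p * r ^ k / fact k" by simp
    finally show "cmod (2 * of_nat k * c k) \<le> (2 * C) * (real k + 1) ^ Suc p * r ^ k / fact k" .
  qed
  then show ?thesis unfolding Gc_def by blast
qed

lemma Gc_low:
  assumes r: "0 < r" and G: "Gc r c"
  shows "Gc r (\<lambda>k. (of_nat k + 1) * \<beta> * c (k + 1))"
proof -
  from G obtain C p where Cp: "\<forall>k. cmod (c k) \<le> C * (real k + 1) ^ p * r ^ k / fact k"
    unfolding Gc_def by blast
  have C0: "C \<ge> 0" by (rule Gc_nonneg[OF Cp])
  have "\<forall>k. cmod ((of_nat k + 1) * \<beta> * c (k + 1)) \<le> (cmod \<beta> * C * r * 2^p) * (real k + 1) ^ p * r ^ k / fact k"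
  proof
    fix k
    have e: "cmod ((of_nat k + 1) * \<beta> * c (k + 1)) = (real k + 1) * cmod \<beta> * cmod (c (k+1))"
      by (simp add: norm_mult) (metis of_nat_Suc norm_of_nat add.commute)
    have "cmod (c (k+1)) \<le> C * (real k + 2) ^ p * r ^ Suc k / fact (Suc k)"
      using Cp[rule_format, of "k+1"] by (simp add: add.commute)
    also have "\<dots> \<le> C * (2 * (real k + 1)) ^ p * r ^ Suc k / fact (Suc k)"
      using C0 r by (intro divide_right_mono mult_right_mono mult_left_mono power_mono) auto
    finally have b: "cmod (c (k+1)) \<le> C * (2 * (real k + 1)) ^ p * r ^ Suc k / fact (Suc k)" .
    have "(real k + 1) * cmod \<beta> * cmod (c (k+1)) \<le> (real k + 1) * cmod \<beta> * (C * (2 * (real k + 1)) ^ p * r ^ Suc k / fact (Suc k))"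
      by (intro mult_left_mono b) auto
    also have "\<dots> = (cmod \<beta> * C * r * 2^p) * (real k + 1) ^ p * r ^ k / fact k"
      unfolding fact_Suc_real power_Suc by (rule aux2) auto
    finally show "cmod ((of_nat k + 1) * \<beta> * c (k + 1)) \<le> (cmod \<beta> * C * r * 2^p) * (real k + 1) ^ p * r ^ k / fact k"
      using e by simp
  qed
  then show ?thesis unfolding Gc_def by blast
qed


lemma comp_dom: "opdom (op_comp A B) = {x \<in> opdom B. opapp B x \<in> opdom A}"
  by (simp add: op_comp_def opdom_def)

lemma comp_app: "opapp (op_comp A B) x = opapp A (opapp B x)"
  by (simp add: op_comp_def opapp_def)

lemma pow_app: "opapp (op_pow A k) = (opapp A ^^ k)"
proof (induction k)
  case 0 then show ?case by (simp add: opapp_def)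
next
  case (Suc k) then show ?case by (simp add: op_comp_def opapp_def)
qed

lemma pow_dom:
  assumes "opdom A = {x \<in> l2. opapp A x \<in> l2}"
  shows "x \<in> opdom (op_pow A k) \<longleftrightarrow> (\<forall>i\<le>k. (opapp A ^^ i) x \<in> l2)"
proof (induction k)
  case 0 then show ?case by (simp add: opdom_def)
next
  case (Suc k)
  have "x \<in> opdom (op_pow A (Suc k)) \<longleftrightarrow> x \<in> opdom (op_pow A k) \<and> (opapp A ^^ k) x \<in> opdom A"
    by (simp add: comp_dom pow_app)
  also have "\<dots> \<longleftrightarrow> (\<forall>i\<le>k. (opapp A ^^ i) x \<in> l2) \<and> (opapp A ^^ Suc k) x \<in> l2"
    using Suc assms by auto
  also have "\<dots> \<longleftrightarrow> (\<forall>i\<le>Suc k. (opapp A ^^ i) x \<in> l2)"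
    using le_Suc_eq by auto
  finally show ?case .
qed

lemma raise_dom: "opdom (raise_op f) = {x \<in> l2. opapp (raise_op f) x \<in> l2}"
  by (simp add: raise_op_def opdom_def opapp_def)
lemma num_dom: "opdom numop = {x \<in> l2. opapp numop x \<in> l2}"
  by (simp add: numop_def opdom_def opapp_def)
lemma lower_dom: "opdom (lower_op g) = {x \<in> l2. opapp (lower_op g) x \<in> l2}"
  by (simp add: lower_op_def opdom_def opapp_def)

definition Lc :: "complex \<Rightarrow> (nat \<Rightarrow> complex) \<Rightarrow> nat \<Rightarrow> complex" where
  "Lc \<beta> c = (\<lambda>k. (of_nat k + 1) * \<beta> * c (k + 1))"
definition Nc :: "(nat \<Rightarrow> complex) \<Rightarrow> nat \<Rightarrow> complex" where
  "Nc c = (\<lambda>k. 2 * of_nat k * c k)"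

lemma raise_pow_V: "(opapp (raise_op f) ^^ i) (Vv f c) = Vv f ((shiftc ^^ i) c)"
  by (induction i) (auto simp: opapp_def raise_V)
lemma num_pow_V: "(opapp numop ^^ i) (Vv f c) = Vv f ((Nc ^^ i) c)"
  by (induction i) (auto simp: opapp_def num_V Nc_def)
lemma lower_pow_V:
  fixes f g :: "nat \<Rightarrow> complex"
  assumes hrel: "\<forall>k. even k \<longrightarrow> g (k + 2) * f (k + 2) - (if k \<ge> 2 then g k * f k else 0) = \<beta>"
  shows "(opapp (lower_op g) ^^ i) (Vv f c) = Vv f ((Lc \<beta> ^^ i) c)"
  by (induction i) (auto simp: opapp_def lower_V[OF hrel] Lc_def)

lemma Gc_Lc: "0 < r \<Longrightarrow> Gc r c \<Longrightarrow> Gc r (Lc \<beta> c)"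
  unfolding Lc_def by (rule Gc_low)
lemma Gc_Nc: "Gc r c \<Longrightarrow> Gc r (Nc c)"
  unfolding Nc_def by (rule Gc_num)
lemma Gc_shift_pow: "0 < r \<Longrightarrow> Gc r c \<Longrightarrow> Gc r ((shiftc ^^ i) c)"
  by (induction i) (auto intro: Gc_shift)
lemma Gc_num_pow: "Gc r c \<Longrightarrow> Gc r ((Nc ^^ i) c)"
  by (induction i) (auto intro: Gc_Nc)
lemma Gc_low_pow: "0 < r \<Longrightarrow> Gc r c \<Longrightarrow> Gc r ((Lc \<beta> ^^ i) c)"
  by (induction i) (auto intro: Gc_Lc)


definition dlt :: "nat \<Rightarrow> nat \<Rightarrow> complex" where "dlt i = (\<lambda>k. if k = i then 1 else 0)"
definition ea :: "complex \<Rightarrow> nat \<Rightarrow> complex" where "ea a = (\<lambda>k. a ^ k / fact k)"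
definition eaN :: "complex \<Rightarrow> nat \<Rightarrow> nat \<Rightarrow> complex" where
  "eaN a N = (\<lambda>k. if k < N then a ^ k / fact k else 0)"

lemma Omega_V: "Omega = Vv f (dlt 0)"
  by (auto simp: Omega_def basis_def Vv_def dlt_def fun_eq_iff)

lemma shift_dlt: "shiftc (dlt i) = dlt (Suc i)"
  by (auto simp: shiftc_def dlt_def fun_eq_iff)

lemma shift_pow_dlt: "(shiftc ^^ i) (dlt 0) = dlt i"
  by (induction i) (auto simp: shift_dlt)

lemma raise_pow_Omega: "(opapp (raise_op f) ^^ i) Omega = Vv f (dlt i)"
  by (simp add: Omega_V[of f] raise_pow_V shift_pow_dlt)

lemma Gc_dlt: assumes "0 < r" shows "Gc r (dlt i)"
proof -
  have "\<forall>k. cmod (dlt i k) \<le> (fact i / r ^ i) * (real k + 1) ^ 0 * r ^ k / fact k"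
    using assms by (auto simp: dlt_def)
  then show ?thesis unfolding Gc_def by blast
qed

lemma Gc_ea: assumes "cmod a \<le> r" shows "Gc r (ea a)"
proof -
  have "\<forall>k. cmod (ea a k) \<le> 1 * (real k + 1) ^ 0 * r ^ k / fact k"
  proof
    fix k
    have "cmod (ea a k) = cmod a ^ k / fact k" by (simp add: ea_def norm_divide norm_power)
    also have "\<dots> \<le> r ^ k / fact k"
      using assms by (intro divide_right_mono power_mono) auto
    finally show "cmod (ea a k) \<le> 1 * (real k + 1) ^ 0 * r ^ k / fact k" by simp
  qed
  then show ?thesis unfolding Gc_def by blast
qed

lemma partial_V: "exp_partial (raise_op f) a Omega N = Vv f (eaN a N)"
proof
  fix j
  have "exp_partial (raise_op f) a Omega N j = (\<Sum>k<N. a ^ k * Vv f (dlt k) j / of_nat (fact k))"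
    by (simp add: exp_partial_def pow_app raise_pow_Omega)
  also have "\<dots> = Vv f (eaN a N) j"
  proof (cases "even j")
    case True
    define t where "t = j div 2"
    have e: "(\<lambda>k. a ^ k * Vv f (dlt k) j / of_nat (fact k)) = (\<lambda>k. if t = k then a^t * Fp f t / fact t else 0)"
      using True by (auto simp: Vv_def dlt_def t_def fun_eq_iff)
    show ?thesis unfolding e using True by (simp add: Vv_def eaN_def t_def)
  next
    case False then show ?thesis by (simp add: Vv_def)
  qed
  finally show "exp_partial (raise_op f) a Omega N j = Vv f (eaN a N) j" .
qed

lemma V_diff: "(\<lambda>j. Vv f c1 j - Vv f c2 j) = Vv f (\<lambda>k. c1 k - c2 k)"
  by (auto simp: Vv_def fun_eq_iff algebra_simps)

lemma l2norm_V: "summable (\<lambda>k. (cmod (c k * Fp f k))^2) \<Longrightarrow>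
   l2norm (Vv f c) = sqrt (\<Sum>k. (cmod (c k * Fp f k))^2)"
  unfolding l2norm_def using V_sums by (simp add: sums_iff)


lemma exp_conv:
  fixes r r' :: real
  assumes r: "0 < r" "r < r'"
    and ev: "\<forall>\<^sub>F k in sequentially. r' < real k / cmod (f (2*k))"
    and a: "cmod a \<le> r"
  shows "exp_converges_to (raise_op f) a Omega (Vv f (ea a))"
proof -
  define u where "u k = (cmod (ea a k * Fp f k))^2" for k
  have su: "summable u" unfolding u_def by (rule Gc_summ[OF r ev Gc_ea[OF a]])
  have l2: "Vv f (ea a) \<in> l2" by (rule Gc_l2[OF r ev Gc_ea[OF a]])
  have nrm: "l2norm (\<lambda>j. exp_partial (raise_op f) a Omega N j - Vv f (ea a) j)
             = sqrt (suminf u - (\<Sum>k<N. u k))" for N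
  proof -
    have d: "(\<lambda>j. exp_partial (raise_op f) a Omega N j - Vv f (ea a) j) = Vv f (\<lambda>k. eaN a N k - ea a k)"
      by (simp add: partial_V V_diff)
    have t: "(\<lambda>k. (cmod ((eaN a N k - ea a k) * Fp f k))^2) = (\<lambda>k. u k - (if k \<in> {..<N} then u k else 0))"
      by (auto simp: eaN_def ea_def u_def fun_eq_iff norm_mult norm_divide norm_minus_commute)
    have sm: "(\<lambda>k. (cmod ((eaN a N k - ea a k) * Fp f k))^2) sums (suminf u - (\<Sum>k<N. u k))"
      unfolding t by (intro sums_diff summable_sums su sums_If_finite_set) simp
    show ?thesis unfolding d using sm V_sums[of "\<lambda>k. eaN a N k - ea a k" f]
      by (simp add: l2norm_def sums_iff)
  qed
  have "(\<lambda>N. sqrt (suminf u - (\<Sum>k<N. u k))) \<longlonglongrightarrow> sqrt (suminf u - suminf u)"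
    by (intro tendsto_intros summable_LIMSEQ su)
  then show ?thesis unfolding exp_converges_to_def nrm using l2 by simp
qed


lemma l2_diff:
  assumes "x \<in> l2" "y \<in> l2" shows "(\<lambda>j. x j - y j) \<in> l2"
proof -
  have s: "summable (\<lambda>j. 2 * (cmod (x j))^2 + 2 * (cmod (y j))^2)"
    using assms unfolding l2_def by (intro summable_add summable_mult) auto
  show ?thesis unfolding l2_def
  proof (simp, rule summable_comparison_test[OF _ s], intro exI allI impI)
    fix j
    have "cmod (x j - y j) \<le> cmod (x j) + cmod (y j)" by (rule norm_triangle_ineq4)
    hence "(cmod (x j - y j))^2 \<le> (cmod (x j) + cmod (y j))^2" by (intro power_mono) auto
    also have "\<dots> \<le> 2 * (cmod (x j))^2 + 2 * (cmod (y j))^2"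
    proof -
      have "0 \<le> (cmod (x j) - cmod (y j))^2" by simp
      then show ?thesis unfolding power2_sum power2_diff by linarith
    qed
    finally show "norm ((cmod (x j - y j))^2) \<le> 2 * (cmod (x j))^2 + 2 * (cmod (y j))^2" by simp
  qed
qed

lemma coord_le:
  assumes "x \<in> l2" shows "cmod (x j) \<le> l2norm x"
proof -
  have "(\<Sum>i\<in>{j}. (cmod (x i))^2) \<le> (\<Sum>i. (cmod (x i))^2)"
    using assms unfolding l2_def by (intro sum_le_suminf) auto
  hence "(cmod (x j))^2 \<le> (\<Sum>i. (cmod (x i))^2)" by simp
  hence "sqrt ((cmod (x j))^2) \<le> l2norm x" unfolding l2norm_def by (rule real_sqrt_le_mono)
  then show ?thesis by simp
qed

lemma Gc_eaN: assumes "cmod a \<le> r" shows "Gc r (eaN a N)"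
proof -
  have "\<forall>k. cmod (eaN a N k) \<le> 1 * (real k + 1) ^ 0 * r ^ k / fact k"
  proof
    fix k
    have "cmod (eaN a N k) \<le> cmod a ^ k / fact k" by (simp add: eaN_def norm_divide norm_power)
    also have "\<dots> \<le> r ^ k / fact k"
      using assms by (intro divide_right_mono power_mono) auto
    finally show "cmod (eaN a N k) \<le> 1 * (real k + 1) ^ 0 * r ^ k / fact k" by simp
  qed
  then show ?thesis unfolding Gc_def by blast
qed

lemma exp_unique:
  fixes r r' :: real
  assumes r: "0 < r" "r < r'"
    and ev: "\<forall>\<^sub>F k in sequentially. r' < real k / cmod (f (2*k))"
    and a: "cmod a \<le> r"
    and y: "exp_converges_to (raise_op f) a Omega y"
  shows "y = Vv f (ea a)"
proof
  fix j
  have yl: "y \<in> l2" and lim: "(\<lambda>N. l2norm (\<lambda>j. exp_partial (raise_op f) a Omega N j - y j)) \<longlonglongrightarrow> 0"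
    using y unfolding exp_converges_to_def by auto
  have "\<forall>N\<ge>Suc j. cmod (Vv f (ea a) j - y j) \<le> l2norm (\<lambda>j. exp_partial (raise_op f) a Omega N j - y j)"
  proof (intro allI impI)
    fix N assume N: "N \<ge> Suc j"
    have pl: "exp_partial (raise_op f) a Omega N \<in> l2"
      unfolding partial_V by (rule Gc_l2[OF r ev Gc_eaN[OF a]])
    have "exp_partial (raise_op f) a Omega N j = Vv f (ea a) j"
      using N by (auto simp: partial_V Vv_def eaN_def ea_def)
    then show "cmod (Vv f (ea a) j - y j) \<le> l2norm (\<lambda>j. exp_partial (raise_op f) a Omega N j - y j)"
      using coord_le[OF l2_diff[OF pl yl], of j] by simp
  qed
  hence "cmod (Vv f (ea a) j - y j) \<le> 0"
    by (intro LIMSEQ_le_const[OF lim]) blast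
  then show "y j = Vv f (ea a) j" by simp
qed


lemma Lc_ea: "Lc \<beta> (ea a) = (\<lambda>k. (a * \<beta>) * ea a k)"
proof
  fix k
  have e: "fact (Suc k) = (of_nat k + 1) * (fact k :: complex)" by (simp add: add.commute)
  moreover have "\<And>(x::complex) F q. x \<noteq> 0 \<Longrightarrow> F \<noteq> 0 \<Longrightarrow> x * \<beta> * (a * q / (x * F)) = a * \<beta> * (q / F)"
    by (simp add: field_simps)
  moreover have "(of_nat k + 1 :: complex) \<noteq> 0"
    by (metis of_nat_Suc of_nat_eq_0_iff add.commute nat.distinct(1))
  ultimately show "Lc \<beta> (ea a) k = (a * \<beta>) * ea a k"
    unfolding Lc_def ea_def Suc_eq_plus1[symmetric] power_Suc e by simp
qed

lemma V_scale: "Vv f (\<lambda>k. t * c k) = (\<lambda>j. t * Vv f c j)"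
  by (auto simp: Vv_def fun_eq_iff)

theorem mainTheorem6:
  fixes f g :: "nat \<Rightarrow> complex" and \<beta> \<alpha> :: complex and M :: ereal and l m n :: nat
  assumes hrel: "\<forall>k. even k \<longrightarrow>
                   g (k + 2) * f (k + 2) - (if k \<ge> 2 then g k * f k else 0) = \<beta>"
    and hf: "\<forall>k\<ge>1. cmod (f (2 * k)) > 0"
    and hM: "((\<lambda>k. ereal (real k / cmod (f (2 * k)))) \<longlongrightarrow> M) sequentially"
    and h\<alpha>: "ereal (cmod \<alpha>) < M"
  shows "Omega \<in> opdom (op_comp (op_pow (lower_op g) l)
                   (op_comp (op_pow numop m)
                     (op_comp (op_pow (raise_op f) n) (op_exp (raise_op f) \<alpha>))))
         \<and> opapp (lower_op g) (opapp (op_exp (raise_op f) \<alpha>) Omega)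
             = (\<lambda>j. (\<alpha> * \<beta>) * opapp (op_exp (raise_op f) \<alpha>) Omega j)"
proof -
  obtain r' where r'1: "ereal (cmod \<alpha>) < ereal r'" and r'2: "ereal r' < M"
    using ereal_dense2[OF h\<alpha>] by blast
  have ar: "cmod \<alpha> < r'" using r'1 by simp
  define r where "r = (cmod \<alpha> + r') / 2"
  have r: "0 < r" "r < r'" and ra: "cmod \<alpha> \<le> r"
  proof -
    have p: "0 < cmod \<alpha> + r'" using ar norm_ge_zero[of \<alpha>] by linarith
    then show "0 < r" "r < r'" "cmod \<alpha> \<le> r" using ar unfolding r_def by (simp_all add: field_simps)
  qed
  have ev: "\<forall>\<^sub>F k in sequentially. r' < real k / cmod (f (2*k))"
    using order_tendstoD(1)[OF hM r'2] by simp
  define \<xi> where "\<xi> = Vv f (ea \<alpha>)"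
  have conv: "exp_converges_to (raise_op f) \<alpha> Omega \<xi>"
    unfolding \<xi>_def by (rule exp_conv[OF r ev ra])
  have app: "opapp (op_exp (raise_op f) \<alpha>) Omega = \<xi>"
    unfolding op_exp_def opapp_def snd_conv
  proof (rule the_equality)
    show "exp_converges_to (raise_op f) \<alpha> Omega \<xi>" by (rule conv)
    fix y assume "exp_converges_to (raise_op f) \<alpha> Omega y"
    then show "y = \<xi>" unfolding \<xi>_def by (rule exp_unique[OF r ev ra])
  qed
  have G0: "Gc r (ea \<alpha>)" by (rule Gc_ea[OF ra])
  have domexp: "Omega \<in> opdom (op_exp (raise_op f) \<alpha>)"
  proof -
    have "Omega \<in> opdom (op_pow (raise_op f) k)" for k
      unfolding pow_dom[OF raise_dom] raise_pow_Omega
      using Gc_l2[OF r ev Gc_dlt[OF r(1)]] by blast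
    then show ?thesis using conv unfolding op_exp_def opdom_def by auto
  qed
  define c1 where "c1 = (shiftc ^^ n) (ea \<alpha>)"
  define c2 where "c2 = (Nc ^^ m) c1"
  have G1: "Gc r c1" unfolding c1_def by (rule Gc_shift_pow[OF r(1) G0])
  have G2: "Gc r c2" unfolding c2_def by (rule Gc_num_pow[OF G1])
  have d1: "\<xi> \<in> opdom (op_pow (raise_op f) n)"
    unfolding pow_dom[OF raise_dom] \<xi>_def raise_pow_V
    using Gc_l2[OF r ev Gc_shift_pow[OF r(1) G0]] by blast
  have a1: "opapp (op_pow (raise_op f) n) \<xi> = Vv f c1"
    unfolding pow_app \<xi>_def raise_pow_V c1_def ..
  have d2: "Vv f c1 \<in> opdom (op_pow numop m)"
    unfolding pow_dom[OF num_dom] num_pow_V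
    using Gc_l2[OF r ev Gc_num_pow[OF G1]] by blast
  have a2: "opapp (op_pow numop m) (Vv f c1) = Vv f c2"
    unfolding pow_app num_pow_V c2_def ..
  have d3: "Vv f c2 \<in> opdom (op_pow (lower_op g) l)"
    unfolding pow_dom[OF lower_dom] lower_pow_V[OF hrel]
    using Gc_l2[OF r ev Gc_low_pow[OF r(1) G2]] by blast
  have part1: "Omega \<in> opdom (op_comp (op_pow (lower_op g) l)
                   (op_comp (op_pow numop m)
                     (op_comp (op_pow (raise_op f) n) (op_exp (raise_op f) \<alpha>))))"
    using domexp d1 d2 d3 a1 a2 app by (simp add: comp_dom comp_app)
  have "opapp (lower_op g) \<xi> = Vv f (Lc \<beta> (ea \<alpha>))"
    unfolding \<xi>_def opapp_def lower_V[OF hrel] Lc_def ..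
  also have "\<dots> = (\<lambda>j. (\<alpha> * \<beta>) * \<xi> j)"
    unfolding Lc_ea V_scale \<xi>_def ..
  finally show ?thesis using part1 app by simp
qed

end
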